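(* Let $\Gamma\subset\mathrm{PSL}_2\mathbb{C}$ be a finite-covolume Kleinian group whose traces all lie in $R$, the ring of integers of the number field $\mathbb{Q}(\mathrm{tr}\,\Gamma)$. If $A,B,X,Y\in\Gamma$ satisfy $\langle A,B\rangle=\Gamma=\langle X,Y\rangle$, then $2-\mathrm{tr}[X,Y]$ is a unit multiple of $2-\mathrm{tr}[A,B]$ in $R$, i.e. $2-\mathrm{tr}[X,Y]=u\,(2-\mathrm{tr}[A,B])$ for some $u\in R^*$.
   Context: $\mathbb{Q}(\mathrm{tr}\,\Gamma)$ is the field generated over $\mathbb{Q}$ by the traces of (lifts to $\mathrm{SL}_2\mathbb{C}$ of) elements of $\Gamma$. $[X,Y]=XYX^{-1}Y^{-1}$; its trace is independent of the choice of lifts. *)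

theory Defs
  imports "HOL-Analysis.Analysis" "HOL-Computational_Algebra.Polynomial"
begin

type_synonym cmat = "complex^2^2"

definition SL2C :: "cmat set" where
  "SL2C = {M. det M = 1}"

(* preimage in SL(2,C) of a subgroup of PSL(2,C): a subgroup of SL(2,C) containing -I *)
definition is_psl_subgroup :: "cmat set \<Rightarrow> bool" where
  "is_psl_subgroup G \<longleftrightarrow> G \<subseteq> SL2C \<and> mat 1 \<in> G \<and> - mat 1 \<in> G \<and>
     (\<forall>g\<in>G. \<forall>h\<in>G. g ** h \<in> G) \<and> (\<forall>g\<in>G. matrix_inv g \<in> G)"

inductive_set gen_sub :: "cmat set \<Rightarrow> cmat set" for S where
  gen_one: "mat 1 \<in> gen_sub S"
| gen_base: "s \<in> S \<Longrightarrow> s \<in> gen_sub S"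
| gen_mult: "g \<in> gen_sub S \<Longrightarrow> h \<in> gen_sub S \<Longrightarrow> g ** h \<in> gen_sub S"
| gen_inv: "g \<in> gen_sub S \<Longrightarrow> matrix_inv g \<in> gen_sub S"

(* discreteness in SL(2,C) (equivalent to discreteness of the image in PSL(2,C)) *)
definition discrete_group :: "cmat set \<Rightarrow> bool" where
  "discrete_group G \<longleftrightarrow> (\<forall>g\<in>G. \<exists>e>0. \<forall>h\<in>G. dist h g < e \<longrightarrow> h = g)"

(* upper half-space model of H^3: points (z,t) with t > 0 *)
definition H3 :: "(complex \<times> real) set" where
  "H3 = {p. snd p > 0}"

(* action of SL(2,C) on the upper half-space *)
definition mobius3 :: "cmat \<Rightarrow> complex \<times> real \<Rightarrow> complex \<times> real" where
  "mobius3 M p = (let a = M$1$1; b = M$1$2; c = M$2$1; d = M$2$2; z = fst p; t = snd p;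
      D = (cmod (c * z + d))^2 + (cmod c)^2 * t^2
    in (((a * z + b) * cnj (c * z + d) + a * cnj c * complex_of_real (t^2)) / complex_of_real D, t / D))"

definition hyp_measure :: "(complex \<times> real) measure" where
  "hyp_measure = density lborel (\<lambda>p. if snd p > 0 then ennreal (1 / (snd p)^3) else 0)"

definition finite_covolume :: "cmat set \<Rightarrow> bool" where
  "finite_covolume G \<longleftrightarrow> (\<exists>F. F \<in> sets lborel \<and> F \<subseteq> H3 \<and> emeasure hyp_measure F < \<infinity> \<and>
      (\<forall>p\<in>H3. \<exists>g\<in>G. \<exists>q\<in>F. mobius3 g q = p))"

definition kleinian_finite_covolume :: "cmat set \<Rightarrow> bool" where
  "kleinian_finite_covolume G \<longleftrightarrow> is_psl_subgroup G \<and> discrete_group G \<and> finite_covolume G"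

definition subfield_C :: "complex set \<Rightarrow> bool" where
  "subfield_C K \<longleftrightarrow> 0 \<in> K \<and> 1 \<in> K \<and> (\<forall>x\<in>K. \<forall>y\<in>K. x + y \<in> K \<and> x - y \<in> K \<and> x * y \<in> K)
     \<and> (\<forall>x\<in>K. x \<noteq> 0 \<longrightarrow> inverse x \<in> K)"

definition trace_field :: "cmat set \<Rightarrow> complex set" where
  "trace_field G = \<Inter>{K. subfield_C K \<and> trace ` G \<subseteq> K}"

definition number_field :: "complex set \<Rightarrow> bool" where
  "number_field K \<longleftrightarrow> subfield_C K \<and> (\<exists>B. finite B \<and> B \<subseteq> K \<and>
     (\<forall>x\<in>K. \<exists>c. (\<forall>b\<in>B. c b \<in> \<rat>) \<and> x = (\<Sum>b\<in>B. c b * b)))"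

definition ring_of_integers :: "complex set \<Rightarrow> complex set" where
  "ring_of_integers K = {x \<in> K. algebraic_int x}"

definition commutator :: "cmat \<Rightarrow> cmat \<Rightarrow> cmat" where
  "commutator X Y = X ** Y ** matrix_inv X ** matrix_inv Y"

end

theory Submission
  imports Defs "Jordan_Normal_Form.Char_Poly"
begin


lemma eig_alg_int:
  fixes D :: "'i \<Rightarrow> 'i \<Rightarrow> int" and w :: "'i \<Rightarrow> complex"
  assumes fin: "finite I" and i0: "i0 \<in> I" "w i0 \<noteq> 0"
    and eq: "\<forall>i\<in>I. (\<Sum>j\<in>I. of_int (D i j) * w j) = z * w i"
  shows "algebraic_int z"
proof -
  define n where "n = card I"
  obtain h where h: "bij_betw h {0..<n} I" using ex_bij_betw_nat_finite[OF fin] n_def by blast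
  define Dm :: "int mat" where "Dm = mat n n (\<lambda>(a,b). D (h a) (h b))"
  define v :: "complex vec" where "v = vec n (\<lambda>a. w (h a))"
  have Dm: "Dm \<in> carrier_mat n n" by (simp add: Dm_def)
  have Dc: "map_mat of_int Dm \<in> carrier_mat n n" using Dm by simp
  have mv: "map_mat of_int Dm *\<^sub>v v = z \<cdot>\<^sub>v v"
  proof (rule eq_vecI)
    fix a assume "a < dim_vec (z \<cdot>\<^sub>v v)"
    then have a: "a < n" by (simp add: v_def)
    have ha: "h a \<in> I" using h a by (auto simp: bij_betw_def)
    have "(map_mat of_int Dm *\<^sub>v v) $ a = (\<Sum>b\<in>{0..<n}. of_int (D (h a) (h b)) * w (h b))"
      using a by (simp add: Dm_def v_def scalar_prod_def)
    also have "\<dots> = (\<Sum>j\<in>I. of_int (D (h a) j) * w j)"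
      by (rule sum.reindex_bij_betw[OF h])
    also have "\<dots> = z * w (h a)" using eq ha by auto
    finally show "(map_mat of_int Dm *\<^sub>v v) $ a = (z \<cdot>\<^sub>v v) $ a" using a by (simp add: v_def)
  qed (simp add: Dm_def v_def)
  obtain a0 where a0: "a0 < n" "h a0 = i0" using h i0 by (auto simp: bij_betw_def)
  have vnz: "v \<noteq> 0\<^sub>v n"
  proof
    assume "v = 0\<^sub>v n"
    then have "v $ a0 = 0" using a0 by simp
    then show False using a0 i0 by (simp add: v_def)
  qed
  have "eigenvector (map_mat of_int Dm) v z"
    unfolding eigenvector_def using mv vnz by (simp add: Dm_def v_def)
  then have "eigenvalue (map_mat of_int Dm) z" unfolding eigenvalue_def by blast
  then have "poly (char_poly (map_mat of_int Dm)) z = 0"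
    using eigenvalue_root_char_poly[OF Dc] by blast
  moreover have "char_poly (map_mat (of_int::int\<Rightarrow>complex) Dm) = map_poly of_int (char_poly Dm)"
    by (rule of_int_hom.char_poly_hom[OF Dm])
  ultimately have r: "poly (map_poly of_int (char_poly Dm)) z = 0"
    by simp
  have "lead_coeff (char_poly Dm) = 1" using degree_monic_char_poly[OF Dm] by simp
  then show ?thesis using r algebraic_int_altdef_ipoly by blast
qed

lemma companion:
  fixes x :: complex and p :: "int poly"
  assumes px: "poly (map_poly of_int p) x = 0" and lc: "lead_coeff p = 1"
  shows "degree p > 0"
    and "\<forall>i<degree p. (\<Sum>i'<degree p. of_int (if Suc i < degree p then (if i' = Suc i then 1 else 0) else - coeff p i') * x^i') = x * x^i"
proof -
  let ?m = "degree p"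
  show m0: "?m > 0"
  proof (rule ccontr)
    assume "\<not> ?m > 0"
    then have "?m = 0" by simp
    then have "p = [:coeff p 0:]" using degree_0_id by metis
    then have "p = 1" using lc \<open>?m = 0\<close> by (simp add: one_pCons)
    then show False using px by simp
  qed
  have ps: "(\<Sum>i\<le>?m. of_int (coeff p i) * x^i) = 0"
    using px by (simp add: poly_altdef degree_map_poly coeff_map_poly)
  have ps2: "(\<Sum>i<?m. of_int (coeff p i) * x^i) = - (x^?m)"
    using ps lc by (simp add: lessThan_Suc_atMost[symmetric] add_eq_0_iff)
  show "\<forall>i<?m. (\<Sum>i'<?m. of_int (if Suc i < ?m then (if i' = Suc i then 1 else 0) else - coeff p i') * x^i') = x * x^i"
  proof (intro allI impI)
    fix i assume i: "i < ?m"
    show "(\<Sum>i'<?m. of_int (if Suc i < ?m then (if i' = Suc i then 1 else 0) else - coeff p i') * x^i') = x * x^i"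
    proof (cases "Suc i < ?m")
      case True
      have "(\<Sum>i'<?m. of_int (if Suc i < ?m then (if i' = Suc i then 1 else 0) else - coeff p i') * x^i')
          = (\<Sum>i'<?m. if i' = Suc i then x^i' else 0)"
        using True by (intro sum.cong) auto
      also have "\<dots> = x^(Suc i)" using True by (simp add: sum.delta')
      finally show ?thesis by simp
    next
      case False
      then have im: "Suc i = ?m" using i by simp
      have "(\<Sum>i'<?m. of_int (if Suc i < ?m then (if i' = Suc i then 1 else 0) else - coeff p i') * x^i')
          = - (\<Sum>i'<?m. of_int (coeff p i') * x^i')"
        using False by (simp add: sum_negf)
      also have "\<dots> = x^?m" using ps2 by simp
      finally show ?thesis using im by (metis power_Suc)
    qed
  qed
qed

lemma if0_mult: "(if P then a else 0) * (b::'a::mult_zero) = (if P then a * b else 0)"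
  by simp

lemma mult_if0: "(b::'a::mult_zero) * (if P then a else 0) = (if P then b * a else 0)"
  by simp

lemma alg_int_plus_times:
  fixes x y :: complex
  assumes "algebraic_int x" "algebraic_int y"
  shows "algebraic_int (x + y) \<and> algebraic_int (x * y)"
proof -
  obtain p where p: "poly (map_poly of_int p) x = 0" "lead_coeff p = 1"
    using assms(1) algebraic_int_altdef_ipoly by blast
  obtain q where q: "poly (map_poly of_int q) y = 0" "lead_coeff q = 1"
    using assms(2) algebraic_int_altdef_ipoly by blast
  define m where "m = degree p"
  define n where "n = degree q"
  define Cx where "Cx = (\<lambda>i i'. if Suc i < m then (if i' = Suc i then 1 else 0) else - coeff p i')"
  define Cy where "Cy = (\<lambda>j j'. if Suc j < n then (if j' = Suc j then 1 else 0) else - coeff q j')"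
  have m0: "m > 0" and cx: "\<forall>i<m. (\<Sum>i'<m. of_int (Cx i i') * x^i') = x * x^i"
    using companion[OF p] unfolding m_def Cx_def by auto
  have n0: "n > 0" and cy: "\<forall>j<n. (\<Sum>j'<n. of_int (Cy j j') * y^j') = y * y^j"
    using companion[OF q] unfolding n_def Cy_def by auto
  define I where "I = {..<m} \<times> {..<n}"
  define w where "w = (\<lambda>(i::nat,j::nat). x^i * y^j)"
  have fin: "finite I" and i0: "(0,0) \<in> I" and w0: "w (0,0) \<noteq> 0"
    using m0 n0 by (auto simp: I_def w_def)
  define Ds where "Ds = (\<lambda>(i::nat,j::nat) (i',j'). Cx i i' * (if j = j' then 1 else 0) + (if i = i' then 1 else 0) * Cy j j')"
  define Dp where "Dp = (\<lambda>(i::nat,j::nat) (i'::nat,j'::nat). Cx i i' * Cy j j')"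
  have "\<forall>k\<in>I. (\<Sum>l\<in>I. of_int (Ds k l) * w l) = (x + y) * w k"
  proof
    fix k assume "k \<in> I"
    then obtain i j where k: "k = (i,j)" "i < m" "j < n" by (auto simp: I_def)
    have "(\<Sum>l\<in>I. of_int (Ds k l) * w l) = (\<Sum>i'<m. \<Sum>j'<n. of_int (Ds (i,j) (i',j')) * (x^i' * y^j'))"
      unfolding I_def sum.cartesian_product by (simp add: k w_def case_prod_beta)
    also have "\<dots> = (\<Sum>i'<m. \<Sum>j'<n. (of_int (Cx i i') * x^i') * (if j = j' then y^j' else 0)
                     + (if i = i' then x^i' else 0) * (of_int (Cy j j') * y^j'))"
      by (intro sum.cong refl) (auto simp: Ds_def algebra_simps)
    also have "\<dots> = (\<Sum>i'<m. of_int (Cx i i') * x^i') * y^j + x^i * (\<Sum>j'<n. of_int (Cy j j') * y^j')"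
    proof -
      have a: "(\<Sum>i'<m. \<Sum>j'<n. (of_int (Cx i i') * x^i') * (if j = j' then y^j' else 0))
          = (\<Sum>i'<m. of_int (Cx i i') * x^i') * y^j"
        using k by (simp add: sum_distrib_right mult_if0 sum.delta)
      have b: "(\<Sum>i'<m. \<Sum>j'<n. (if i = i' then x^i' else 0) * (of_int (Cy j j') * y^j'))
          = x^i * (\<Sum>j'<n. of_int (Cy j j') * y^j')"
        using k by (subst sum.swap) (simp add: sum_distrib_left if0_mult sum.delta)
      show ?thesis using a b by (simp add: sum.distrib)
    qed
    also have "\<dots> = (x + y) * w k" using k cx cy by (simp add: w_def algebra_simps)
    finally show "(\<Sum>l\<in>I. of_int (Ds k l) * w l) = (x + y) * w k" .
  qed
  then have 1: "algebraic_int (x + y)" using eig_alg_int[OF fin i0, of w] w0 by blast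
  have "\<forall>k\<in>I. (\<Sum>l\<in>I. of_int (Dp k l) * w l) = (x * y) * w k"
  proof
    fix k assume "k \<in> I"
    then obtain i j where k: "k = (i,j)" "i < m" "j < n" by (auto simp: I_def)
    have "(\<Sum>l\<in>I. of_int (Dp k l) * w l) = (\<Sum>i'<m. \<Sum>j'<n. (of_int (Cx i i') * x^i') * (of_int (Cy j j') * y^j'))"
      unfolding I_def sum.cartesian_product by (intro sum.cong refl) (auto simp: k w_def Dp_def)
    also have "\<dots> = (\<Sum>i'<m. of_int (Cx i i') * x^i') * (\<Sum>j'<n. of_int (Cy j j') * y^j')"
      by (simp add: sum_product)
    also have "\<dots> = (x * y) * w k" using k cx cy by (simp add: w_def algebra_simps)
    finally show "(\<Sum>l\<in>I. of_int (Dp k l) * w l) = (x * y) * w k" .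
  qed
  then have 2: "algebraic_int (x * y)" using eig_alg_int[OF fin i0, of w] w0 by blast
  from 1 2 show ?thesis ..
qed


hide_const (open) Matrix.mat Matrix.vec Determinant.det Matrix.row Matrix.col
no_notation Matrix.vec_index (infixl "$" 100)


definition bas3 :: "cmat \<Rightarrow> cmat \<Rightarrow> 3 \<Rightarrow> cmat" where
  "bas3 A B k = (if k = 1 then A else if k = 2 then B else A ** B)"

definition lin :: "complex \<Rightarrow> complex^3 \<Rightarrow> cmat \<Rightarrow> cmat \<Rightarrow> cmat" where
  "lin c0 c A B = (\<chi> i j. c0 * (mat 1 :: cmat)$i$j + (\<Sum>k\<in>UNIV. c$k * bas3 A B k $i$j))"

definition v3 :: "complex \<Rightarrow> complex \<Rightarrow> complex \<Rightarrow> complex^3" where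
  "v3 a b c = (\<chi> k. if k = 1 then a else if k = 2 then b else c)"

lemma v3_nth [simp]: "v3 a b c $ 1 = a" "v3 a b c $ 2 = b" "v3 a b c $ 3 = c"
  by (simp_all add: v3_def)

lemmas ent = Finite_Cartesian_Product.vec_eq_iff forall_2 matrix_matrix_mult_def sum_2 sum_3 Finite_Cartesian_Product.mat_def
   lin_def bas3_def det_2 trace_def

lemma left_A:
  fixes A B :: cmat
  shows "A ** lin d0 d A B = lin (- det A * d$1) (v3 (d0 + trace A * d$1) (- det A * d$3) (d$2 + trace A * d$3)) A B"
  by (simp add: ent algebra_simps)

lemma left_B:
  fixes A B :: cmat
  shows "B ** lin d0 d A B = lin (d$1 * (trace (A**B) - trace A * trace B) - det B * d$2 - det B * trace A * d$3)
     (v3 (d$1 * trace B + det B * d$3) (d0 + d$1 * trace A + d$2 * trace B + d$3 * trace (A**B)) (- d$1)) A B"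
  by (simp add: ent algebra_simps)

definition ringset :: "complex set \<Rightarrow> bool" where
  "ringset P \<longleftrightarrow> 0 \<in> P \<and> 1 \<in> P \<and> (\<forall>x\<in>P. \<forall>y\<in>P. x + y \<in> P \<and> x * y \<in> P \<and> - x \<in> P)"

lemma ringsetD:
  assumes "ringset P"
  shows "0 \<in> P" "1 \<in> P" "x \<in> P \<Longrightarrow> y \<in> P \<Longrightarrow> x + y \<in> P"
    "x \<in> P \<Longrightarrow> y \<in> P \<Longrightarrow> x * y \<in> P" "x \<in> P \<Longrightarrow> - x \<in> P"
    "x \<in> P \<Longrightarrow> y \<in> P \<Longrightarrow> x - y \<in> P"
  using assms unfolding ringset_def by (auto, metis diff_conv_add_uminus)

definition inS :: "complex set \<Rightarrow> cmat \<Rightarrow> cmat \<Rightarrow> cmat \<Rightarrow> bool" where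
  "inS P A B g \<longleftrightarrow> (\<exists>c0 c. c0 \<in> P \<and> (\<forall>k. c$k \<in> P) \<and> g = lin c0 c A B)"

lemma v3_in: "a \<in> P \<Longrightarrow> b \<in> P \<Longrightarrow> c \<in> P \<Longrightarrow> \<forall>k. v3 a b c $ k \<in> P"
  unfolding v3_def by (simp add: forall_3)

lemma inS_left_A:
  assumes P: "ringset P" and dA: "det A = 1" and tA: "trace A \<in> P" and g: "inS P A B g"
  shows "inS P A B (A ** g)"
proof -
  obtain c0 c where c: "c0 \<in> P" "\<forall>k. c$k \<in> P" "g = lin c0 c A B" using g inS_def by blast
  have m: "x \<in> P \<Longrightarrow> y \<in> P \<Longrightarrow> x * y \<in> P" "x \<in> P \<Longrightarrow> y \<in> P \<Longrightarrow> x + y \<in> P"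
     "x \<in> P \<Longrightarrow> - x \<in> P" for x y
    using ringsetD[OF P] by auto
  have "\<forall>k. v3 (c0 + trace A * c$1) (- c$3) (c$2 + trace A * c$3) $ k \<in> P"
    by (intro v3_in m) (use c tA in auto)
  moreover have "- c$1 \<in> P" using c m by auto
  ultimately show ?thesis unfolding inS_def c(3) left_A dA by auto
qed

lemma inS_left_B:
  assumes P: "ringset P" and dB: "det B = 1" and tA: "trace A \<in> P" and tB: "trace B \<in> P"
    and tC: "trace (A ** B) \<in> P" and g: "inS P A B g"
  shows "inS P A B (B ** g)"
proof -
  obtain c0 c where c: "c0 \<in> P" "\<forall>k. c$k \<in> P" "g = lin c0 c A B" using g inS_def by blast
  have m: "x \<in> P \<Longrightarrow> y \<in> P \<Longrightarrow> x * y \<in> P" "x \<in> P \<Longrightarrow> y \<in> P \<Longrightarrow> x + y \<in> P"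
     "x \<in> P \<Longrightarrow> y \<in> P \<Longrightarrow> x - y \<in> P" "x \<in> P \<Longrightarrow> - x \<in> P" for x y
    using ringsetD[OF P] by auto
  have "\<forall>k. v3 (c$1 * trace B + c$3) (c0 + c$1 * trace A + c$2 * trace B + c$3 * trace (A**B)) (- c$1) $ k \<in> P"
    by (intro v3_in m) (use c tA tB tC in auto)
  moreover have "c$1 * (trace (A**B) - trace A * trace B) - c$2 - trace A * c$3 \<in> P"
    by (intro m) (use c tA tB tC in auto)
  ultimately show ?thesis unfolding inS_def c(3) left_B dB mult_1 mult_1_right by auto
qed

definition smul :: "complex \<Rightarrow> cmat \<Rightarrow> cmat" where
  "smul x M = (\<chi> i j. x * M$i$j)"

lemma lin_mult: "lin c0 c A B ** H = smul c0 H + smul (c$1) (A**H) + smul (c$2) (B**H) + smul (c$3) (A**(B**H))"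
  by (simp add: ent smul_def algebra_simps)

lemma lin_add: "lin c0 c A B + lin d0 d A B = lin (c0 + d0) (c + d) A B"
  by (simp add: ent algebra_simps)

lemma lin_smul: "smul x (lin c0 c A B) = lin (x * c0) (x *s c) A B"
  by (simp add: ent smul_def algebra_simps)

lemma inS_add: assumes P: "ringset P" and "inS P A B g" "inS P A B h" shows "inS P A B (g + h)"
proof -
  obtain c0 c where c: "c0 \<in> P" "\<forall>k. c$k \<in> P" "g = lin c0 c A B" using assms inS_def by blast
  obtain d0 d where d: "d0 \<in> P" "\<forall>k. d$k \<in> P" "h = lin d0 d A B" using assms inS_def by blast
  have "\<forall>k. (c + d)$k \<in> P" using c d ringsetD[OF P] by simp
  moreover have "c0 + d0 \<in> P" using c d ringsetD[OF P] by simp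
  ultimately show ?thesis unfolding inS_def c(3) d(3) lin_add by blast
qed

lemma inS_smul: assumes P: "ringset P" and "x \<in> P" "inS P A B g" shows "inS P A B (smul x g)"
proof -
  obtain c0 c where c: "c0 \<in> P" "\<forall>k. c$k \<in> P" "g = lin c0 c A B" using assms inS_def by blast
  have "\<forall>k. (x *s c)$k \<in> P" using c ringsetD[OF P] assms(2) by simp
  moreover have "x * c0 \<in> P" using c ringsetD[OF P] assms(2) by simp
  ultimately show ?thesis unfolding inS_def c(3) lin_smul by blast
qed

lemma inS_mult:
  assumes P: "ringset P" and dA: "det A = 1" and dB: "det B = 1" and tA: "trace A \<in> P" and tB: "trace B \<in> P"
    and tC: "trace (A ** B) \<in> P" and g: "inS P A B g" and h: "inS P A B h"
  shows "inS P A B (g ** h)"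
proof -
  obtain c0 c where c: "c0 \<in> P" "\<forall>k. c$k \<in> P" "g = lin c0 c A B" using g inS_def by blast
  have hA: "inS P A B (A ** h)" by (rule inS_left_A[OF P dA tA h])
  have hB: "inS P A B (B ** h)" by (rule inS_left_B[OF P dB tA tB tC h])
  have hAB: "inS P A B (A ** (B ** h))" by (rule inS_left_A[OF P dA tA hB])
  show ?thesis unfolding c(3) lin_mult
    by (intro inS_add[OF P] inS_smul[OF P] hA hB hAB h) (use c in auto)
qed

lemma inS_one: "ringset P \<Longrightarrow> inS P A B (mat 1)"
  unfolding inS_def by (rule exI[of _ 1], rule exI[of _ 0]) (auto simp: ringsetD ent)

lemma inS_A: "ringset P \<Longrightarrow> inS P A B A"
  unfolding inS_def by (rule exI[of _ 0], rule exI[of _ "v3 1 0 0"]) (auto simp: ringsetD ent v3_in)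

lemma inS_B: "ringset P \<Longrightarrow> inS P A B B"
  unfolding inS_def by (rule exI[of _ 0], rule exI[of _ "v3 0 1 0"]) (auto simp: ringsetD ent v3_in)

lemma inS_mone: "ringset P \<Longrightarrow> inS P A B (- mat 1)"
  unfolding inS_def by (rule exI[of _ "-1"], rule exI[of _ 0]) (auto simp: ringsetD ent)

definition adj2 :: "cmat \<Rightarrow> cmat" where
  "adj2 M = smul (trace M) (mat 1) + smul (-1) M"

lemma adj2_mult: "M ** adj2 M = smul (det M) (mat 1)" "adj2 M ** M = smul (det M) (mat 1)"
  by (simp_all add: ent adj2_def smul_def algebra_simps)

lemma smul_one_mat: "smul 1 (mat 1) = mat 1"
  by (simp add: ent smul_def)

lemma minv:
  assumes d: "det M = 1"
  shows "matrix_inv M = adj2 M"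
proof -
  have h: "M ** adj2 M = mat 1 \<and> adj2 M ** M = mat 1"
    using adj2_mult[of M] d smul_one_mat by simp
  have i: "M ** matrix_inv M = mat 1 \<and> matrix_inv M ** M = mat 1"
    unfolding matrix_inv_def by (rule someI_ex) (use h in blast)
  have "adj2 M = adj2 M ** (M ** matrix_inv M)" using i by (simp add: matrix_mul_rid)
  also have "\<dots> = (adj2 M ** M) ** matrix_inv M" by (simp add: matrix_mul_assoc)
  also have "\<dots> = matrix_inv M" using h by (simp add: matrix_mul_lid)
  finally show ?thesis by simp
qed

lemma gen_in_S:
  assumes P: "ringset P" and gen: "gen_sub {A, B, - mat 1} = G" and SL: "G \<subseteq> SL2C"
    and tr: "\<forall>g\<in>G. trace g \<in> P" and gG: "g \<in> G"
  shows "inS P A B g"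
proof -
  have AG0: "A \<in> gen_sub {A, B, - mat 1}" "B \<in> gen_sub {A, B, - mat 1}"
    by (rule gen_sub.gen_base, simp)+
  then have ABG0: "A ** B \<in> gen_sub {A, B, - mat 1}" by (rule gen_sub.gen_mult)
  have AG: "A \<in> G" "B \<in> G" and ABG: "A ** B \<in> G" using AG0 ABG0 gen by simp_all
  have dA: "det A = 1" "det B = 1" using AG SL by (auto simp: SL2C_def)
  have tA: "trace A \<in> P" "trace B \<in> P" "trace (A ** B) \<in> P" using AG ABG tr by auto
  have "g \<in> gen_sub {A, B, - mat 1} \<Longrightarrow> inS P A B g"
  proof (induction rule: gen_sub.induct)
    case gen_one then show ?case by (rule inS_one[OF P])
  next
    case (gen_base s)
    then have "s = A \<or> s = B \<or> s = - mat 1" by simp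
    then show ?case using inS_A[OF P] inS_B[OF P] inS_mone[OF P] by metis
  next
    case (gen_mult g h) then show ?case using inS_mult[OF P dA tA] by simp
  next
    case (gen_inv g)
    have "g \<in> G" using gen_inv.hyps gen by simp
    then have dg: "det g = 1" and tg: "trace g \<in> P" using SL tr by (auto simp: SL2C_def)
    have "- 1 \<in> P" using ringsetD[OF P] by simp
    then show ?case unfolding minv[OF dg] adj2_def
      by (intro inS_add[OF P] inS_smul[OF P] inS_one[OF P] tg gen_inv.IH)
  qed
  then show ?thesis using gG gen by simp
qed

definition w3 :: "cmat \<Rightarrow> complex^3" where
  "w3 g = v3 (g$1$1 - g$2$2) (g$1$2) (g$2$1)"

definition W :: "(3 \<Rightarrow> cmat) \<Rightarrow> complex^3^3" where
  "W e = (\<chi> i. w3 (e i))"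

lemma w3_lin: "w3 (lin c0 c A B) = (\<chi> j. \<Sum>k\<in>UNIV. c$k * w3 (bas3 A B k) $ j)"
  unfolding Finite_Cartesian_Product.vec_eq_iff forall_3 by (simp add: w3_def lin_def sum_3 Finite_Cartesian_Product.mat_def algebra_simps)

lemma change:
  assumes e: "\<forall>i. inS P A B (e i)"
  shows "\<exists>M. (\<forall>i k. M$i$k \<in> P) \<and> W e = M ** W (bas3 A B)"
proof -
  have "\<forall>i. \<exists>c. \<exists>c0. c0 \<in> P \<and> (\<forall>k. c$k \<in> P) \<and> e i = lin c0 c A B"
    using e unfolding inS_def by blast
  then obtain f where f: "\<forall>i. \<exists>c0. c0 \<in> P \<and> (\<forall>k. f i $k \<in> P) \<and> e i = lin c0 (f i) A B"
    by metis
  define M :: "complex^3^3" where "M = (\<chi> i. f i)"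
  have "W e = M ** W (bas3 A B)"
  proof (subst Finite_Cartesian_Product.vec_eq_iff, intro allI)
    fix i
    obtain c0 where "e i = lin c0 (f i) A B" using f by blast
    then show "W e $ i = (M ** W (bas3 A B)) $ i"
      by (simp add: W_def M_def w3_lin matrix_matrix_mult_def)
  qed
  moreover have "\<forall>i k. M$i$k \<in> P" using f unfolding M_def by (metis vec_lambda_beta)
  ultimately show ?thesis by blast
qed

lemma det_in:
  assumes P: "ringset P" and M: "\<forall>i j. (M::complex^3^3)$i$j \<in> P"
  shows "det M \<in> P"
proof -
  have m: "x \<in> P \<Longrightarrow> y \<in> P \<Longrightarrow> x * y \<in> P" "x \<in> P \<Longrightarrow> y \<in> P \<Longrightarrow> x + y \<in> P"
     "x \<in> P \<Longrightarrow> y \<in> P \<Longrightarrow> x - y \<in> P" for x y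
    using ringsetD[OF P] by auto
  show ?thesis unfolding det_3 by (intro m) (use M in auto)
qed

lemma mm_entry: "((X::cmat) ** Y)$i$j = X$i$1 * Y$1$j + X$i$2 * Y$2$j"
  by (simp add: matrix_matrix_mult_def sum_2)

lemma adj2_entry: "adj2 M $1$1 = M$2$2" "adj2 M $1$2 = - M$1$2" "adj2 M $2$1 = - M$2$1" "adj2 M $2$2 = M$1$1"
  by (simp_all add: ent adj2_def smul_def)

lemma trace2: "trace (M::cmat) = M$1$1 + M$2$2"
  by (simp add: trace_def sum_2)

lemma W_entry: "W e $ i $ 1 = e i $1$1 - e i $2$2" "W e $ i $ 2 = e i $1$2" "W e $ i $ 3 = e i $2$1"
  by (simp_all add: W_def w3_def)

lemma bas3_simps: "bas3 A B 1 = A" "bas3 A B 2 = B" "bas3 A B 3 = A ** B"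
  by (simp_all add: bas3_def)

lemma detW: "det (W (bas3 A B)) = trace (A ** B ** adj2 A ** adj2 B) - 2 * det A * det B"
  unfolding det_3 det_2 trace2 W_entry bas3_simps mm_entry adj2_entry
  by (simp add: algebra_simps)


lemma ringset_roi:
  assumes "subfield_C K"
  shows "ringset (ring_of_integers K)"
proof -
  have K: "0 \<in> K" "1 \<in> K" "\<And>x y. x \<in> K \<Longrightarrow> y \<in> K \<Longrightarrow> x + y \<in> K \<and> x - y \<in> K \<and> x * y \<in> K"
    using assms unfolding subfield_C_def by auto
  have neg: "x \<in> K \<Longrightarrow> - x \<in> K" for x using K(1) K(3)[of 0 x] by simp
  show ?thesis unfolding ringset_def ring_of_integers_def
    using K neg alg_int_plus_times by auto
qed

theorem mainTheorem5:
  fixes G :: "cmat set" and A B X Y :: cmat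
  assumes "kleinian_finite_covolume G"
    and "number_field (trace_field G)"
    and "trace ` G \<subseteq> ring_of_integers (trace_field G)"
    and "A \<in> G" "B \<in> G" "X \<in> G" "Y \<in> G"
    and "gen_sub {A, B, - mat 1} = G"
    and "gen_sub {X, Y, - mat 1} = G"
  shows "\<exists>u. u \<noteq> 0 \<and> u \<in> ring_of_integers (trace_field G) \<and> inverse u \<in> ring_of_integers (trace_field G) \<and>
           2 - trace (commutator X Y) = u * (2 - trace (commutator A B))"
proof -
  define P where "P = ring_of_integers (trace_field G)"
  have P: "ringset P" unfolding P_def
    by (rule ringset_roi) (use assms(2) in \<open>simp add: number_field_def\<close>)
  have ps: "is_psl_subgroup G" using assms(1) by (simp add: kleinian_finite_covolume_def)
  have SL: "G \<subseteq> SL2C" and clos: "\<forall>g\<in>G. \<forall>h\<in>G. g ** h \<in> G"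
    using ps by (auto simp: is_psl_subgroup_def)
  have tr: "\<forall>g\<in>G. trace g \<in> P" using assms(3) by (auto simp: P_def)
  have d: "det A = 1" "det B = 1" "det X = 1" "det Y = 1" using SL assms(4-7) by (auto simp: SL2C_def)
  have b1: "\<forall>i. bas3 X Y i \<in> G" using assms(6,7) clos by (simp add: bas3_def)
  have b2: "\<forall>i. bas3 A B i \<in> G" using assms(4,5) clos by (simp add: bas3_def)
  have s1: "\<forall>i. inS P A B (bas3 X Y i)" using b1 gen_in_S[OF P assms(8) SL tr] by blast
  have s2: "\<forall>i. inS P X Y (bas3 A B i)" using b2 gen_in_S[OF P assms(9) SL tr] by blast
  obtain M where M: "\<forall>i k. M$i$k \<in> P" "W (bas3 X Y) = M ** W (bas3 A B)"
    using change[OF s1] by blast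
  obtain N where N: "\<forall>i k. N$i$k \<in> P" "W (bas3 A B) = N ** W (bas3 X Y)"
    using change[OF s2] by blast
  have dM: "det M \<in> P" and dN: "det N \<in> P" using det_in[OF P] M(1) N(1) by blast+
  have cAB: "det (W (bas3 A B)) = trace (commutator A B) - 2"
    using detW[of A B] d by (simp add: commutator_def minv)
  have cXY: "det (W (bas3 X Y)) = trace (commutator X Y) - 2"
    using detW[of X Y] d by (simp add: commutator_def minv)
  have e1: "det (W (bas3 X Y)) = det M * det (W (bas3 A B))" using M(2) by (simp add: det_mul)
  have e2: "det (W (bas3 A B)) = det N * det (W (bas3 X Y))" using N(2) by (simp add: det_mul)
  show ?thesis
  proof (cases "det (W (bas3 A B)) = 0")
    case True
    then have "det (W (bas3 X Y)) = 0" using e1 by simp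
    then show ?thesis using True cAB cXY ringsetD(2)[OF P] unfolding P_def[symmetric]
      by (intro exI[of _ 1]) auto
  next
    case False
    have "det (W (bas3 A B)) = (det N * det M) * det (W (bas3 A B))" using e1 e2 by (metis mult.assoc)
    then have "(det N * det M) * det (W (bas3 A B)) = 1 * det (W (bas3 A B))" by (metis mult_1)
    then have NM: "det N * det M = 1" using False mult_cancel_right by blast
    then have "det M \<noteq> 0" by auto
    moreover have "inverse (det M) = det N" using NM by (metis inverse_unique mult.commute)
    moreover have "2 - trace (commutator X Y) = det M * (2 - trace (commutator A B))"
      using e1 cAB cXY by (simp add: algebra_simps)
    ultimately show ?thesis using dM dN unfolding P_def[symmetric] by auto
  qed
qed

end
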